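(* Let $\mathbb{R}^{2n}$ have coordinates $(x_1,y_1,\dots,x_n,y_n)$. For a symplectic form $\omega = \sum_{i=1}^n f_i(x_i,y_i)\,dx_i\wedge dy_i$ with $f_i:\mathbb{R}^2\to\mathbb{R}$ smooth and nowhere vanishing, define for $x\in\mathbb{R}^{2n}$: $m_\omega(x) = \min\{f_i(x_i,y_i) : 1\le i\le n\}$ and $M_\omega(x) = \max\{f_i(x_i,y_i) : 1\le i\le n\}$. Let $\omega_1 = \sum_{i=1}^n f_i(x_i,y_i)\,dx_i\wedge dy_i$ and $\omega_2 = \sum_{i=1}^n g_i(x_i,y_i)\,dx_i\wedge dy_i$ be two such forms (all $f_i,g_i$ smooth and nowhere vanishing). If $\omega_1$ and $\omega_2$ are $\omega_{\mathrm{std}}$-symplectomorphic, then $\inf_{x}m_{\omega_1}(x) = \inf_x m_{\omega_2}(x)$, $\sup_x m_{\omega_1}(x) = \sup_x m_{\omega_2}(x)$, $\inf_x M_{\omega_1}(x) = \inf_x M_{\omega_2}(x)$, and $\sup_x M_{\omega_1}(x) = \sup_x M_{\omega_2}(x)$, where $x$ ranges over $\mathbb{R}^{2n}$ (values in the extended reals).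
   Context: $\omega_{\mathrm{std}} = \sum_{i=1}^n dx_i\wedge dy_i$. $\operatorname{Symp}(\mathbb{R}^{2n},\omega_{\mathrm{std}})$ is the set of diffeomorphisms $\varphi$ of $\mathbb{R}^{2n}$ with $\varphi^*\omega_{\mathrm{std}} = \omega_{\mathrm{std}}$, where $(\varphi^*\omega)(x)(v,w) = \omega(\varphi(x))(d\varphi_x v, d\varphi_x w)$. Symplectic forms $\omega_1,\omega_2$ are $\omega_{\mathrm{std}}$-symplectomorphic if there is $\varphi\in\operatorname{Symp}(\mathbb{R}^{2n},\omega_{\mathrm{std}})$ with $\varphi^*\omega_1 = \omega_2$. *)

theory Defs
  imports "HOL-Analysis.Analysis"
begin

text \<open>Iterated partial derivatives (along basis directions) of a map between
  Euclidean spaces; smooth = C-infinity = all of them exist as Frechet derivatives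
  everywhere.\<close>

inductive_set iter_partials ::
  "('a::euclidean_space \<Rightarrow> 'b::real_normed_vector) \<Rightarrow> ('a \<Rightarrow> 'b) set"
  for f where
  base: "f \<in> iter_partials f"
| step: "g \<in> iter_partials f \<Longrightarrow> b \<in> Basis \<Longrightarrow>
           (\<lambda>x. frechet_derivative g (at x) b) \<in> iter_partials f"

definition smooth :: "('a::euclidean_space \<Rightarrow> 'b::real_normed_vector) \<Rightarrow> bool" where
  "smooth f \<longleftrightarrow> (\<forall>g \<in> iter_partials f. g differentiable_on UNIV)"

definition diffeomorphism :: "('a::euclidean_space \<Rightarrow> 'a) \<Rightarrow> bool" where
  "diffeomorphism \<phi> \<longleftrightarrow> bij \<phi> \<and> smooth \<phi> \<and> smooth (inv \<phi>)"

text \<open>Points of R^{2n} are (real * real)^n: the i-th component is (x_i, y_i).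
  A 2-form is a map point \<Rightarrow> tangent vector \<Rightarrow> tangent vector \<Rightarrow> real.\<close>

type_synonym 'n pt = "(real \<times> real) ^ 'n"
type_synonym 'n form2 = "'n pt \<Rightarrow> 'n pt \<Rightarrow> 'n pt \<Rightarrow> real"

text \<open>The split form  sum_i f_i(x_i,y_i) dx_i wedge dy_i.\<close>
definition split_form :: "('n::finite \<Rightarrow> real \<times> real \<Rightarrow> real) \<Rightarrow> 'n form2" where
  "split_form f p v w =
     (\<Sum>i\<in>UNIV. f i (p $ i) * (fst (v $ i) * snd (w $ i) - snd (v $ i) * fst (w $ i)))"

definition omega_std :: "'n::finite form2" where
  "omega_std = split_form (\<lambda>i z. 1)"

definition pullback :: "('n::finite pt \<Rightarrow> 'n pt) \<Rightarrow> 'n form2 \<Rightarrow> 'n form2" where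
  "pullback \<phi> \<omega> p v w =
     \<omega> (\<phi> p) (frechet_derivative \<phi> (at p) v) (frechet_derivative \<phi> (at p) w)"

definition symplecto_std :: "('n::finite pt \<Rightarrow> 'n pt) \<Rightarrow> bool" where
  "symplecto_std \<phi> \<longleftrightarrow> diffeomorphism \<phi> \<and> pullback \<phi> omega_std = omega_std"

definition std_symplectomorphic :: "'n::finite form2 \<Rightarrow> 'n form2 \<Rightarrow> bool" where
  "std_symplectomorphic \<omega>1 \<omega>2 \<longleftrightarrow> (\<exists>\<phi>. symplecto_std \<phi> \<and> pullback \<phi> \<omega>1 = \<omega>2)"

definition m_omega :: "('n::finite \<Rightarrow> real \<times> real \<Rightarrow> real) \<Rightarrow> 'n pt \<Rightarrow> real" where
  "m_omega f p = Min {f i (p $ i) | i. True}"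

definition M_omega :: "('n::finite \<Rightarrow> real \<times> real \<Rightarrow> real) \<Rightarrow> 'n pt \<Rightarrow> real" where
  "M_omega f p = Max {f i (p $ i) | i. True}"

end

theory Submission
  imports Defs
begin

definition Bf :: "('n::finite \<Rightarrow> real) \<Rightarrow> 'n pt \<Rightarrow> 'n pt \<Rightarrow> real" where
  "Bf a v w = (\<Sum>i\<in>UNIV. a i * (fst (v $ i) * snd (w $ i) - snd (v $ i) * fst (w $ i)))"

lemma Bf_axis:
  "Bf a v (axis i (x, y)) = a i * (fst (v $ i) * y - snd (v $ i) * x)"
proof -
  have "Bf a v (axis i (x, y)) = (\<Sum>j\<in>UNIV. if j = i then a i * (fst (v $ i) * y - snd (v $ i) * x) else 0)"
    unfolding Bf_def by (rule sum.cong) (auto simp: axis_def)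
  also have "\<dots> = a i * (fst (v $ i) * y - snd (v $ i) * x)" by simp
  finally show ?thesis .
qed

lemma Bf_zero_left [simp]: "Bf a 0 w = 0"
  by (simp add: Bf_def)

lemma Bf_shift: "Bf (\<lambda>i. a i - c) v w = Bf a v w - c * Bf (\<lambda>i. 1) v w"
  unfolding Bf_def sum_distrib_left sum_subtractf[symmetric] by (rule sum.cong) (auto simp: algebra_simps)

lemma degen:
  "(\<exists>v. v \<noteq> 0 \<and> (\<forall>w. Bf a v w = 0)) \<longleftrightarrow> (\<exists>i. a i = 0)"
proof
  assume "\<exists>v. v \<noteq> 0 \<and> (\<forall>w. Bf a v w = 0)"
  then obtain v where v: "v \<noteq> 0" "\<And>w. Bf a v w = 0" by blast
  then obtain i where i: "v $ i \<noteq> 0" by (metis vec_eq_iff zero_index)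
  have 1: "a i * fst (v $ i) = 0" using v(2)[of "axis i (0,1)"] by (simp add: Bf_axis)
  have 2: "a i * snd (v $ i) = 0" using v(2)[of "axis i (1,0)"] by (simp add: Bf_axis)
  have "fst (v $ i) \<noteq> 0 \<or> snd (v $ i) \<noteq> 0" using i by (simp add: prod_eq_iff)
  then show "\<exists>i. a i = 0" using 1 2 by auto
next
  assume "\<exists>i. a i = 0"
  then obtain i where i: "a i = 0" by blast
  have "axis i (1::real, 0::real) \<noteq> 0"
    by (simp add: axis_eq_0_iff prod_eq_iff)
  moreover have "\<forall>w. Bf a (axis i (1, 0)) w = 0"
    unfolding Bf_def by (auto intro!: sum.neutral simp: axis_def i)
  ultimately show "\<exists>v. v \<noteq> 0 \<and> (\<forall>w. Bf a v w = 0)" by blast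
qed

lemma same_values:
  fixes D :: "'n::finite pt \<Rightarrow> 'n pt"
  assumes lin: "linear D"
    and std: "\<And>v w. Bf (\<lambda>i. 1) (D v) (D w) = Bf (\<lambda>i. 1) v w"
    and ab: "\<And>v w. Bf a (D v) (D w) = Bf b v w"
  shows "{a i | i. True} = {b i | i. True}"
proof -
  have inj: "inj D"
    unfolding linear_injective_0[OF lin]
  proof (intro allI impI)
    fix v assume "D v = 0"
    then have "\<forall>w. Bf (\<lambda>i. 1) v w = 0" using std[of v] by simp
    with degen[of "\<lambda>i. 1"] show "v = 0" by auto
  qed
  have surj: "surj D" using linear_injective_imp_surjective[OF lin inj] by simp
  have D0: "D 0 = 0" using lin by (simp add: linear_0)
  have shift: "Bf (\<lambda>i. a i - c) (D v) (D w) = Bf (\<lambda>i. b i - c) v w" for c v w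
    by (simp add: Bf_shift ab std)
  have "(\<exists>i. a i - c = 0) \<longleftrightarrow> (\<exists>i. b i - c = 0)" for c
  proof -
    have "(\<exists>u. u \<noteq> 0 \<and> (\<forall>w. Bf (\<lambda>i. a i - c) u w = 0)) \<longleftrightarrow>
          (\<exists>v. v \<noteq> 0 \<and> (\<forall>w. Bf (\<lambda>i. b i - c) v w = 0))"
    proof
      assume "\<exists>u. u \<noteq> 0 \<and> (\<forall>w. Bf (\<lambda>i. a i - c) u w = 0)"
      then obtain u where u: "u \<noteq> 0" "\<forall>w. Bf (\<lambda>i. a i - c) u w = 0" by blast
      obtain v where v: "u = D v" using surj by (metis surjD)
      have "v \<noteq> 0" using u(1) v D0 by auto
      moreover have "\<forall>w. Bf (\<lambda>i. b i - c) v w = 0" using u(2) v shift by metis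
      ultimately show "\<exists>v. v \<noteq> 0 \<and> (\<forall>w. Bf (\<lambda>i. b i - c) v w = 0)" by blast
    next
      assume "\<exists>v. v \<noteq> 0 \<and> (\<forall>w. Bf (\<lambda>i. b i - c) v w = 0)"
      then obtain v where v: "v \<noteq> 0" "\<forall>w. Bf (\<lambda>i. b i - c) v w = 0" by blast
      have "D v \<noteq> 0" using v(1) inj D0 by (metis injD)
      moreover have "\<forall>w. Bf (\<lambda>i. a i - c) (D v) w = 0"
      proof
        fix w
        obtain w' where "w = D w'" using surj by (metis surjD)
        then show "Bf (\<lambda>i. a i - c) (D v) w = 0" using v(2) shift by metis
      qed
      ultimately show "\<exists>u. u \<noteq> 0 \<and> (\<forall>w. Bf (\<lambda>i. a i - c) u w = 0)" by blast
    qed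
    then show ?thesis by (simp only: degen)
  qed
  then have "(\<exists>i. a i = c) \<longleftrightarrow> (\<exists>i. b i = c)" for c by (metis eq_iff_diff_eq_0)
  then show ?thesis by (auto; metis)
qed

theorem theorem2p6:
  fixes f g :: "'n::finite \<Rightarrow> real \<times> real \<Rightarrow> real"
  assumes f_smooth: "\<And>i. smooth (f i)" and f_nz: "\<And>i z. f i z \<noteq> 0"
      and g_smooth: "\<And>i. smooth (g i)" and g_nz: "\<And>i z. g i z \<noteq> 0"
      and symp: "std_symplectomorphic (split_form f) (split_form g)"
  shows "(INF p. ereal (m_omega f p)) = (INF p. ereal (m_omega g p)) \<and>
         (SUP p. ereal (m_omega f p)) = (SUP p. ereal (m_omega g p)) \<and>
         (INF p. ereal (M_omega f p)) = (INF p. ereal (M_omega g p)) \<and>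
         (SUP p. ereal (M_omega f p)) = (SUP p. ereal (M_omega g p))"
proof -
  obtain \<phi> where sy: "symplecto_std \<phi>" and pb: "pullback \<phi> (split_form f) = split_form g"
    using symp unfolding std_symplectomorphic_def by blast
  have dif: "diffeomorphism \<phi>" and pstd: "pullback \<phi> omega_std = omega_std"
    using sy unfolding symplecto_std_def by auto
  have bij: "bij \<phi>" and sm: "smooth \<phi>" using dif unfolding diffeomorphism_def by auto
  have vals: "{f i (\<phi> p $ i) | i. True} = {g i (p $ i) | i. True}" for p
  proof -
    let ?D = "frechet_derivative \<phi> (at p)"
    have "\<phi> differentiable_on UNIV" using sm iter_partials.base unfolding smooth_def by blast
    then have "\<phi> differentiable (at p)" by (simp add: differentiable_on_def)
    then have "(\<phi> has_derivative ?D) (at p)" by (simp add: frechet_derivative_works)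
    then have lin: "linear ?D" by (simp add: has_derivative_linear)
    show ?thesis
    proof (rule same_values[OF lin])
      fix v w
      show "Bf (\<lambda>i. 1) (?D v) (?D w) = Bf (\<lambda>i. 1) v w"
        using fun_cong[OF fun_cong[OF fun_cong[OF pstd, of p], of v], of w]
        by (simp add: pullback_def omega_std_def split_form_def Bf_def)
      show "Bf (\<lambda>i. f i (\<phi> p $ i)) (?D v) (?D w) = Bf (\<lambda>i. g i (p $ i)) v w"
        using fun_cong[OF fun_cong[OF fun_cong[OF pb, of p], of v], of w]
        by (simp add: pullback_def split_form_def Bf_def)
    qed
  qed
  have m: "m_omega f (\<phi> p) = m_omega g p" and MM: "M_omega f (\<phi> p) = M_omega g p" for p
    using vals[of p] by (simp_all add: m_omega_def M_omega_def)
  have surj: "surj \<phi>" using bij bij_is_surj by blast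
  have img: "h ` UNIV = (\<lambda>p. h (\<phi> p)) ` UNIV" for h :: "'n pt \<Rightarrow> ereal"
    using surj by (metis image_image)
  show ?thesis
    using img[of "\<lambda>p. ereal (m_omega f p)"] img[of "\<lambda>p. ereal (M_omega f p)"]
    by (simp add: m MM)
qed

end
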